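(* Let $w\in W_n$ have first right descent at $k\geq0$, let $\gamma$ be its A-code, $m=\ell(\mu(w))$, $\beta=\beta(w)$, and for $s\geq1$ let $\phi_s:=\#\{i\in[1,k]\mid\gamma_i\geq s\}$. (a) If $\beta_{s+1}>\beta_s+1$, then $|\beta_s|$ is a left descent of $w$. (b) If $s\leq m$, then $\phi_s=k$, while if $s>m$ and $\beta_{s+1}=\beta_s+1$, then $\phi_s=\phi_{s+1}$.
   Context: $W_n$: signed permutations $w=(w_1,\ldots,w_n)$ of $\{1,\ldots,n\}$. $w$ has a right descent at $0$ iff $w_1<0$ and at $i\geq1$ iff $w_i>w_{i+1}$; the first right descent is the smallest such index. $w$ has a left descent at $0$ iff $-1$ is an entry of $w$, and at $i\geq1$ iff $w$ has one of the forms $(\cdots i{+}1\cdots i\cdots)$, $(\cdots i\cdots\overline{i{+}1}\cdots)$, $(\cdots\overline{i{+}1}\cdots i\cdots)$, $(\cdots\bar i\cdots\overline{i{+}1}\cdots)$, where $\bar a=-a$. A-code: $\gamma_i:=\#\{j>i\mid w_j<w_i\}$. $\mu(w)$ is the strict partition of absolute values of the negative entries. Listing $w_{k+1},\ldots,w_n$ increasingly as $u_1<\cdots<u_m<0<u_{m+1}<\cdots<u_{n-k}$, $\beta(w):=(u_1+1,\ldots,u_m+1,u_{m+1},\ldots,u_{n-k})$; indices $s$ in the statement satisfy $1\leq s<n-k$ where $\beta_{s+1}$ is referenced. *)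

theory Defs
  imports Main
begin

text \<open>A signed permutation w in W_n is represented by its window notation as a
function w :: nat => int, where w i is the entry at position i (1 <= i <= n);
values outside {1..n} are irrelevant. Negative entries stand for barred letters.\<close>

definition signed_perm :: "nat \<Rightarrow> (nat \<Rightarrow> int) \<Rightarrow> bool" where
  "signed_perm n w \<longleftrightarrow> bij_betw (\<lambda>i. nat \<bar>w i\<bar>) {1..n} {1..n}"

definition right_descent :: "nat \<Rightarrow> (nat \<Rightarrow> int) \<Rightarrow> nat \<Rightarrow> bool" where
  "right_descent n w i \<longleftrightarrow>
     (i = 0 \<and> 1 \<le> n \<and> w 1 < 0) \<or> (1 \<le> i \<and> i < n \<and> w i > w (i + 1))"

definition first_right_descent :: "nat \<Rightarrow> (nat \<Rightarrow> int) \<Rightarrow> nat \<Rightarrow> bool" where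
  "first_right_descent n w k \<longleftrightarrow>
     right_descent n w k \<and> (\<forall>j<k. \<not> right_descent n w j)"

definition left_descent :: "nat \<Rightarrow> (nat \<Rightarrow> int) \<Rightarrow> nat \<Rightarrow> bool" where
  "left_descent n w i \<longleftrightarrow>
     (i = 0 \<and> (\<exists>j\<in>{1..n}. w j = -1)) \<or>
     (1 \<le> i \<and> i < n \<and>
       (\<exists>p\<in>{1..n}. \<exists>q\<in>{1..n}. p < q \<and>
          ((w p = int i + 1 \<and> w q = int i) \<or>
           (w p = int i \<and> w q = -(int i + 1)) \<or>
           (w p = -(int i + 1) \<and> w q = int i) \<or>
           (w p = - int i \<and> w q = -(int i + 1)))))"

definition acode :: "nat \<Rightarrow> (nat \<Rightarrow> int) \<Rightarrow> nat \<Rightarrow> nat" where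
  "acode n w i = card {j. i < j \<and> j \<le> n \<and> w j < w i}"

definition mu :: "nat \<Rightarrow> (nat \<Rightarrow> int) \<Rightarrow> nat list" where
  "mu n w = rev (sorted_list_of_set {nat (- w j) | j. j \<in> {1..n} \<and> w j < 0})"

definition beta :: "nat \<Rightarrow> (nat \<Rightarrow> int) \<Rightarrow> nat \<Rightarrow> nat \<Rightarrow> int" where
  "beta n w k s =
     (let u = sorted_list_of_set (w ` {k+1..n}) ! (s - 1) in if u < 0 then u + 1 else u)"

definition phi :: "nat \<Rightarrow> (nat \<Rightarrow> int) \<Rightarrow> nat \<Rightarrow> nat \<Rightarrow> nat" where
  "phi n w k s = card {i \<in> {1..k}. acode n w i \<ge> s}"

end

theory Submission
  imports Defs
begin

lemma sl_less:
  assumes "finite U" "i < j" "j < length (sorted_list_of_set U)"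
  shows "sorted_list_of_set U ! i < sorted_list_of_set U ! j"
  using assms sorted_wrt_nth_less[OF strict_sorted_list_of_set] by blast

lemma sl_le_iff:
  assumes "finite U" "i < length (sorted_list_of_set U)" "j < length (sorted_list_of_set U)"
  shows "sorted_list_of_set U ! i < sorted_list_of_set U ! j \<longleftrightarrow> i < j"
  using assms sl_less[OF assms(1)]
  by (metis less_asym' linorder_neqE_nat)

lemma sl_between:
  fixes U :: "int set"
  assumes "finite U" "Suc j < length (sorted_list_of_set U)" "x \<in> U"
    "sorted_list_of_set U ! j < x" "x < sorted_list_of_set U ! Suc j"
  shows False
proof -
  let ?L = "sorted_list_of_set U"
  have "x \<in> set ?L" using assms by simp
  then obtain t where t: "t < length ?L" "?L ! t = x" by (auto simp: in_set_conv_nth)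
  have "j < t" using sl_le_iff[OF assms(1), of j t] t assms by auto
  moreover have "t < Suc j" using sl_le_iff[OF assms(1), of t "Suc j"] t assms by auto
  ultimately show False by simp
qed

lemma sl_in:
  assumes "finite U" "i < length (sorted_list_of_set U)"
  shows "sorted_list_of_set U ! i \<in> U"
  using assms by (metis nth_mem set_sorted_list_of_set)

lemma card_img_idx:
  fixes U :: "int set"
  assumes "finite U" "r \<le> length (sorted_list_of_set U)"
  shows "card ((\<lambda>t. sorted_list_of_set U ! t) ` {..<r}) = r"
proof -
  have "inj_on (\<lambda>t. sorted_list_of_set U ! t) {..<r}"
    using assms by (intro inj_onI) (metis distinct_sorted_list_of_set le_trans lessThan_iff
        nth_eq_iff_index_eq order_less_imp_le less_le_trans)
  then show ?thesis by (simp add: card_image)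
qed

theorem lemma11:
  fixes n k :: nat and w :: "nat \<Rightarrow> int"
  assumes "signed_perm n w"
    and "first_right_descent n w k"
  shows "(\<forall>s. 1 \<le> s \<and> s < n - k \<and> beta n w k (s + 1) > beta n w k s + 1
              \<longrightarrow> left_descent n w (nat \<bar>beta n w k s\<bar>))
       \<and> (\<forall>s. 1 \<le> s \<and> s \<le> length (mu n w) \<longrightarrow> phi n w k s = k)
       \<and> (\<forall>s. 1 \<le> s \<and> s < n - k \<and> s > length (mu n w) \<and> beta n w k (s + 1) = beta n w k s + 1
              \<longrightarrow> phi n w k s = phi n w k (s + 1))"
proof -
  have bij: "bij_betw (\<lambda>i. nat \<bar>w i\<bar>) {1..n} {1..n}"
    using assms(1) unfolding signed_perm_def by simp
  have nz: "w j \<noteq> 0" "\<bar>w j\<bar> \<le> int n" if "j \<in> {1..n}" for j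
  proof -
    have "nat \<bar>w j\<bar> \<in> {1..n}" using bij that bij_betwE by blast
    then show "w j \<noteq> 0" "\<bar>w j\<bar> \<le> int n" by auto
  qed
  have injw: "inj_on w {1..n}"
  proof (rule inj_onI)
    fix x y assume "x \<in> {1..n}" "y \<in> {1..n}" "w x = w y"
    then have "nat \<bar>w x\<bar> = nat \<bar>w y\<bar>" by simp
    then show "x = y" using bij_betw_imp_inj_on[OF bij] \<open>x \<in> {1..n}\<close> \<open>y \<in> {1..n}\<close>
      by (auto dest: inj_onD)
  qed
  have surjw: "\<exists>j\<in>{1..n}. w j = v \<or> w j = - v" if "1 \<le> v" "v \<le> int n" for v
  proof -
    have "nat v \<in> {1..n}" using that by auto
    then have "nat v \<in> (\<lambda>i. nat \<bar>w i\<bar>) ` {1..n}" using bij_betw_imp_surj_on[OF bij]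
      by simp
    then obtain j where "j \<in> {1..n}" "nat v = nat \<bar>w j\<bar>" by auto
    then show ?thesis using that by (intro bexI[of _ j]) auto
  qed
  have rdk: "right_descent n w k" and nrd: "\<And>j. j < k \<Longrightarrow> \<not> right_descent n w j"
    using assms(2) unfolding first_right_descent_def by auto
  have kn: "k < n" using rdk unfolding right_descent_def by auto
  have pos: "w p > 0" if "1 \<le> p" "p \<le> k" for p
    using that
  proof (induction p)
    case 0 then show ?case by simp
  next
    case (Suc p)
    show ?case
    proof (cases "p = 0")
      case True
      have "\<not> right_descent n w 0" using nrd Suc by simp
      then have "w 1 \<ge> 0" using kn unfolding right_descent_def by auto
      moreover have "w 1 \<noteq> 0" using nz[of 1] kn by auto
      ultimately show ?thesis using True by simp
    next
      case False
      have "\<not> right_descent n w p" using nrd Suc by simp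
      then have "w p \<le> w (Suc p)" using False Suc kn unfolding right_descent_def by auto
      then show ?thesis using Suc False by simp
    qed
  qed
  have mono: "w i < w j" if "1 \<le> i" "i < j" "j \<le> k" for i j
    using that
  proof (induction j)
    case 0 then show ?case by simp
  next
    case (Suc j)
    have "\<not> right_descent n w j" using nrd Suc by simp
    then have "w j \<le> w (Suc j)" using Suc kn unfolding right_descent_def by auto
    moreover have "w j \<noteq> w (Suc j)"
    proof -
      have "j \<in> {1..n}" "Suc j \<in> {1..n}" using Suc kn by auto
      then show ?thesis using inj_on_eq_iff[OF injw] by (metis n_not_Suc_n)
    qed
    ultimately have "w j < w (Suc j)" by simp
    then show ?case using Suc by (cases "i = j") auto
  qed
  define U where "U = w ` {k+1..n}"
  define L where "L = sorted_list_of_set U"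
  have finU: "finite U" unfolding U_def by simp
  have lenL: "length L = n - k"
  proof -
    have "inj_on w {k+1..n}" using injw by (rule inj_on_subset) auto
    then show ?thesis unfolding L_def U_def by (simp add: card_image)
  qed
  have betaeq: "beta n w k s = (if L ! (s-1) < 0 then L ! (s-1) + 1 else L ! (s-1))" for s
    unfolding beta_def L_def U_def Let_def by simp
  have inU: "\<exists>q\<in>{k+1..n}. w q = L ! t" if "t < n - k" for t
  proof -
    have "L ! t \<in> U" using sl_in[OF finU, of t] that lenL L_def by simp
    then show ?thesis unfolding U_def by auto
  qed
  have Lless: "L ! i < L ! j" if "i < j" "j < n - k" for i j
    using sl_less[OF finU, of i j] that lenL L_def by simp
  have Lbetween: False if "Suc j < n - k" "x \<in> U" "L ! j < x" "x < L ! Suc j" for j x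
    using sl_between[OF finU, of j x] that lenL L_def by simp
  have A: "left_descent n w (nat \<bar>beta n w k s\<bar>)"
    if s1: "1 \<le> s" and s2: "s < n - k" and gap: "beta n w k (s + 1) > beta n w k s + 1" for s
  proof -
    define a where "a = L ! (s-1)"
    define b where "b = L ! s"
    have ab: "a < b" unfolding a_def b_def using Lless s1 s2 by simp
    obtain q where q: "q \<in> {k+1..n}" "w q = a" using inU[of "s-1"] s2 a_def by (metis diff_le_self le_less_trans)
    obtain q' where q': "q' \<in> {k+1..n}" "w q' = b" using inU[of "s"] s2 b_def by auto
    have bn: "b \<le> int n" using nz[of q'] q' by auto
    have an: "\<bar>a\<bar> \<le> int n" using nz[of q] q by auto
    have a0: "a \<noteq> 0" using nz[of q] q by auto
    have bs: "beta n w k s = (if a < 0 then a + 1 else a)" using betaeq[of s] a_def by simp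
    have bs1: "beta n w k (s+1) = (if b < 0 then b + 1 else b)" using betaeq[of "s+1"] b_def by simp
    have btw: "x \<notin> U" if "a < x" "x < b" for x
      using Lbetween[of "s-1" x] that s1 s2 a_def b_def by auto
    show ?thesis
    proof (cases "a > 0")
      case True
      have gb: "b > a + 1" using gap bs bs1 True ab by auto
      define i where "i = nat a"
      have ia: "int i = a" using True i_def by simp
      obtain p where p: "p \<in> {1..n}" "w p = a + 1 \<or> w p = - (a + 1)"
        using surjw[of "a+1"] True gb bn by auto
      have "(\<exists>p\<in>{1..n}. \<exists>q\<in>{1..n}. p < q \<and>
          ((w p = int i + 1 \<and> w q = int i) \<or>
           (w p = int i \<and> w q = -(int i + 1)) \<or>
           (w p = -(int i + 1) \<and> w q = int i) \<or>
           (w p = - int i \<and> w q = -(int i + 1))))"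
      proof (cases "w p = a + 1")
        case True
        have "p \<notin> {k+1..n}" using btw[of "a+1"] gb True unfolding U_def by (metis image_eqI less_add_one)
        then have "p < q" using p q by auto
        then show ?thesis using p q True ia by (intro bexI[of _ p] bexI[of _ q]) auto
      next
        case False
        then have wp: "w p = - (a+1)" using p by auto
        have "p \<noteq> q" using wp q(2) \<open>a > 0\<close> by auto
        then consider "p < q" | "q < p" by linarith
        then show ?thesis
        proof cases
          case 1 then show ?thesis using p q wp ia by (intro bexI[of _ p] bexI[of _ q]) auto
        next
          case 2 then show ?thesis using p q wp ia by (intro bexI[of _ q] bexI[of _ p]) auto
        qed
      qed
      moreover have "1 \<le> i" "i < n" using ia True ab bn by auto
      ultimately show ?thesis unfolding left_descent_def using bs True i_def by simp
    next
      case False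
      then have aneg: "a < 0" using a0 by simp
      show ?thesis
      proof (cases "a = -1")
        case True
        then show ?thesis unfolding left_descent_def using bs q by auto
      next
        case False
        then have am2: "a \<le> -2" using aneg by simp
        have gb: "b > a + 1" using gap bs bs1 aneg ab by (auto split: if_splits)
        define i where "i = nat (- a - 1)"
        have ia: "int i = - a - 1" using am2 i_def by simp
        have bsi: "nat \<bar>beta n w k s\<bar> = i" using bs aneg i_def by simp
        obtain p where p: "p \<in> {1..n}" "w p = int i \<or> w p = - int i"
          using surjw[of "int i"] ia am2 an by auto
        have "w p \<noteq> - int i"
        proof
          assume wp: "w p = - int i"
          show False
          proof (cases "p \<le> k")
            case True
            then show False using pos[of p] p wp ia am2 by auto
          next
            case False
            then have "w p \<in> U" using p unfolding U_def by auto
            then show False using btw[of "w p"] wp ia gb by auto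
          qed
        qed
        then have wp: "w p = int i" using p by auto
        have "p \<noteq> q" using wp q(2) ia aneg by auto
        then consider "p < q" | "q < p" by linarith
        then have "(\<exists>p\<in>{1..n}. \<exists>q\<in>{1..n}. p < q \<and>
          ((w p = int i + 1 \<and> w q = int i) \<or>
           (w p = int i \<and> w q = -(int i + 1)) \<or>
           (w p = -(int i + 1) \<and> w q = int i) \<or>
           (w p = - int i \<and> w q = -(int i + 1))))"
        proof cases
          case 1 then show ?thesis using p q wp ia by (intro bexI[of _ p] bexI[of _ q]) auto
        next
          case 2 then show ?thesis using p q wp ia by (intro bexI[of _ q] bexI[of _ p]) auto
        qed
        moreover have "1 \<le> i" "i < n" using ia am2 an by auto
        ultimately show ?thesis unfolding left_descent_def using bsi by simp
      qed
    qed
  qed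
  define N where "N = {j \<in> {1..n}. w j < 0}"
  have lenmu: "length (mu n w) = card N"
  proof -
    have "{nat (- w j) | j. j \<in> {1..n} \<and> w j < 0} = (\<lambda>j. nat (- w j)) ` N"
      unfolding N_def by auto
    moreover have "inj_on (\<lambda>j. nat (- w j)) N"
    proof (rule inj_onI)
      fix x y assume "x \<in> N" "y \<in> N" "nat (- w x) = nat (- w y)"
      then have "w x = w y" "x \<in> {1..n}" "y \<in> {1..n}" unfolding N_def by auto
      then show "x = y" using injw by (auto dest: inj_onD)
    qed
    ultimately show ?thesis unfolding mu_def N_def
      by (simp add: card_image)
  qed
  have finN: "finite N" unfolding N_def by simp
  have acode_eq: "acode n w i = card (U \<inter> {..< w i})" if "1 \<le> i" "i \<le> k" for i
  proof -
    have "{j. i < j \<and> j \<le> n \<and> w j < w i} = {j \<in> {k+1..n}. w j < w i}"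
    proof (intro set_eqI iffI)
      fix j assume "j \<in> {j. i < j \<and> j \<le> n \<and> w j < w i}"
      then show "j \<in> {j \<in> {k+1..n}. w j < w i}" using mono[of i j] that
        by (cases "j \<le> k") auto
    qed (use that in auto)
    moreover have "w ` {j \<in> {k+1..n}. w j < w i} = U \<inter> {..< w i}"
      unfolding U_def by auto
    moreover have "inj_on w {j \<in> {k+1..n}. w j < w i}"
      using injw by (rule inj_on_subset) auto
    ultimately show ?thesis unfolding acode_def by (metis card_image)
  qed
  have B: "phi n w k s = k" if "1 \<le> s" "s \<le> length (mu n w)" for s
  proof -
    have "{i \<in> {1..k}. acode n w i \<ge> s} = {1..k}"
    proof (intro set_eqI iffI)
      fix i assume i: "i \<in> {1..k}"
      have "w ` N \<subseteq> U \<inter> {..< w i}"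
      proof
        fix x assume "x \<in> w ` N"
        then obtain j where j: "j \<in> N" "x = w j" by auto
        have "j > k" using pos[of j] j unfolding N_def by (cases "j \<le> k") auto
        then show "x \<in> U \<inter> {..< w i}" using j pos[of i] i unfolding N_def U_def by auto
      qed
      then have "card (w ` N) \<le> card (U \<inter> {..< w i})"
        using finU by (intro card_mono) auto
      moreover have "card (w ` N) = card N"
        using injw by (intro card_image, rule inj_on_subset) (auto simp: N_def)
      ultimately show "i \<in> {i \<in> {1..k}. acode n w i \<ge> s}"
        using acode_eq[of i] i that lenmu by auto
    qed auto
    then show ?thesis unfolding phi_def by simp
  qed
  have C: "phi n w k s = phi n w k (s + 1)"
    if s1: "1 \<le> s" and s2: "s < n - k" and sm: "s > length (mu n w)"
      and eqb: "beta n w k (s + 1) = beta n w k s + 1" for s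
  proof (cases "k = 0")
    case True then show ?thesis unfolding phi_def by simp
  next
    case False
    define a where "a = L ! (s-1)"
    define b where "b = L ! s"
    have ab: "a < b" unfolding a_def b_def using Lless s1 s2 by simp
    have apos: "a > 0"
    proof (rule ccontr)
      assume "\<not> a > 0"
      then have neg: "L ! t < 0" if "t < s" for t
      proof -
        obtain q where q: "q \<in> {k+1..n}" "w q = a" using inU[of "s-1"] s2 a_def by (metis diff_le_self le_less_trans)
        have "a \<noteq> 0" using nz[of q] q by auto
        then have "a < 0" using \<open>\<not> a > 0\<close> by simp
        moreover have "L ! t \<le> a"
        proof (cases "t = s - 1")
          case False
          then have "t < s - 1" "s - 1 < n - k" using that s2 by auto
          then show ?thesis using Lless[of t "s-1"] a_def by simp
        qed (use a_def in simp)
        ultimately show ?thesis by simp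
      qed
      have "(\<lambda>t. L ! t) ` {..<s} \<subseteq> w ` N"
      proof
        fix x assume "x \<in> (\<lambda>t. L ! t) ` {..<s}"
        then obtain t where t: "t < s" "x = L ! t" by auto
        obtain q where q: "q \<in> {k+1..n}" "w q = L ! t" using inU[of t] s2 t by auto
        have "q \<in> N" using q neg[of t] t unfolding N_def by auto
        then show "x \<in> w ` N" using q t by (metis image_eqI)
      qed
      then have "card ((\<lambda>t. L ! t) ` {..<s}) \<le> card (w ` N)"
        using finN by (intro card_mono) auto
      moreover have "card ((\<lambda>t. L ! t) ` {..<s}) = s"
        using card_img_idx[OF finU, of s] s2 lenL L_def by simp
      moreover have "card (w ` N) \<le> card N" using finN card_image_le by blast
      ultimately show False using sm lenmu by simp
    qed
    have bab: "b = a + 1" using eqb betaeq[of s] betaeq[of "s+1"] apos ab a_def b_def by auto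
    have "{i \<in> {1..k}. acode n w i \<ge> s} = {i \<in> {1..k}. acode n w i \<ge> s + 1}"
    proof -
      have "acode n w i \<noteq> s" if i: "i \<in> {1..k}" for i
      proof
        assume ac: "acode n w i = s"
        let ?c = "w i"
        have cnot: "?c \<notin> U"
        proof
          assume "?c \<in> U"
          then obtain j where "j \<in> {k+1..n}" "w j = w i" unfolding U_def by auto
          then show False using injw i kn by (auto dest: inj_onD)
        qed
        have card_eq: "card (U \<inter> {..< ?c}) = s" using acode_eq[of i] i ac by simp
        show False
        proof (cases "?c \<le> a")
          case True
          have "U \<inter> {..< ?c} \<subseteq> (\<lambda>t. L ! t) ` {..<s-1}"
          proof
            fix x assume x: "x \<in> U \<inter> {..< ?c}"
            then have "x \<in> set L" using finU L_def by simp
            then obtain t where t: "t < n - k" "L ! t = x" using lenL by (auto simp: in_set_conv_nth)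
            have "t < s - 1"
            proof (rule ccontr)
              assume "\<not> t < s - 1"
              then have "L ! (s-1) \<le> L ! t" using Lless[of "s-1" t] t by (cases "t = s-1") auto
              then show False using x t True a_def by auto
            qed
            then show "x \<in> (\<lambda>t. L ! t) ` {..<s-1}" using t by auto
          qed
          then have "card (U \<inter> {..< ?c}) \<le> card ((\<lambda>t. L ! t) ` {..<s-1})"
            by (intro card_mono) auto
          also have "\<dots> \<le> s - 1" using card_image_le by fastforce
          finally show False using card_eq s1 by simp
        next
          case False
          have "b \<noteq> ?c" using cnot sl_in[OF finU, of s] s2 lenL L_def b_def by auto
          then have "?c > b" using False bab by simp
          have "(\<lambda>t. L ! t) ` {..<s+1} \<subseteq> U \<inter> {..< ?c}"
          proof
            fix x assume "x \<in> (\<lambda>t. L ! t) ` {..<s+1}"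
            then obtain t where t: "t < s + 1" "x = L ! t" by auto
            have "L ! t \<le> b" using Lless[of t s] t s2 b_def by (cases "t = s") auto
            moreover have "L ! t \<in> U" using sl_in[OF finU, of t] t s2 lenL L_def by simp
            ultimately show "x \<in> U \<inter> {..< ?c}" using t \<open>?c > b\<close> by auto
          qed
          then have "card ((\<lambda>t. L ! t) ` {..<s+1}) \<le> card (U \<inter> {..< ?c})"
            using finU by (intro card_mono) auto
          moreover have "card ((\<lambda>t. L ! t) ` {..<s+1}) = s + 1"
            using card_img_idx[OF finU, of "s+1"] s2 lenL L_def by simp
          ultimately show False using card_eq by simp
        qed
      qed
      then show ?thesis by fastforce
    qed
    then show ?thesis unfolding phi_def by simp
  qed
  show ?thesis using A B C by blast
qed

end
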